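(* For every finite connected chordal graph $G$, the set $C^1(G)=\{v: e(v)\le\operatorname{rad}(G)+1\}$ is a tight upper certificate of $G$, i.e. $e(u)=\min_{x\in C^1(G)}(d(u,x)+e(x))$ for every vertex $u$.
   Context: A graph is chordal if every induced cycle of length at least 4 has a chord. $d$ shortest-path distance, $e(v)=\max_u d(v,u)$, $\operatorname{rad}(G)=\min_v e(v)$. *)

theory Defs
  imports Main
begin

definition fin_graph :: "'a set \<Rightarrow> ('a \<Rightarrow> 'a \<Rightarrow> bool) \<Rightarrow> bool" where
  "fin_graph V E \<longleftrightarrow> finite V \<and>
     (\<forall>u v. E u v \<longrightarrow> u \<in> V \<and> v \<in> V \<and> u \<noteq> v \<and> E v u)"

definition walk :: "('a \<Rightarrow> 'a \<Rightarrow> bool) \<Rightarrow> 'a list \<Rightarrow> bool" where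
  "walk E xs \<longleftrightarrow> xs \<noteq> [] \<and> (\<forall>i. Suc i < length xs \<longrightarrow> E (xs ! i) (xs ! Suc i))"

definition connected_graph :: "'a set \<Rightarrow> ('a \<Rightarrow> 'a \<Rightarrow> bool) \<Rightarrow> bool" where
  "connected_graph V E \<longleftrightarrow> V \<noteq> {} \<and>
     (\<forall>u\<in>V. \<forall>v\<in>V. \<exists>xs. walk E xs \<and> hd xs = u \<and> last xs = v)"

text \<open>Chordal: every cycle of length at least 4 (distinct vertices
  v_0,...,v_{k-1} with v_i adjacent to v_{(i+1) mod k}) has a chord, i.e. an edge
  between two vertices that are not consecutive on the cycle.
  (Equivalently: no induced cycle of length at least 4.)\<close>
definition chordal :: "'a set \<Rightarrow> ('a \<Rightarrow> 'a \<Rightarrow> bool) \<Rightarrow> bool" where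
  "chordal V E \<longleftrightarrow>
     (\<forall>cs. distinct cs \<and> length cs \<ge> 4 \<and> set cs \<subseteq> V \<and>
        (\<forall>i < length cs. E (cs ! i) (cs ! ((i + 1) mod length cs)))
      \<longrightarrow> (\<exists>i < length cs. \<exists>j < length cs.
             j \<noteq> (i + 1) mod length cs \<and> i \<noteq> (j + 1) mod length cs \<and> i \<noteq> j \<and>
             E (cs ! i) (cs ! j)))"

definition gdist :: "('a \<Rightarrow> 'a \<Rightarrow> bool) \<Rightarrow> 'a \<Rightarrow> 'a \<Rightarrow> nat" where
  "gdist E u v = (LEAST n. \<exists>xs. walk E xs \<and> hd xs = u \<and> last xs = v \<and> length xs = Suc n)"

definition ecc :: "'a set \<Rightarrow> ('a \<Rightarrow> 'a \<Rightarrow> bool) \<Rightarrow> 'a \<Rightarrow> nat" where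
  "ecc V E v = Max ((gdist E v) ` V)"

definition rad :: "'a set \<Rightarrow> ('a \<Rightarrow> 'a \<Rightarrow> bool) \<Rightarrow> nat" where
  "rad V E = Min ((ecc V E) ` V)"

definition C1 :: "'a set \<Rightarrow> ('a \<Rightarrow> 'a \<Rightarrow> bool) \<Rightarrow> 'a set" where
  "C1 V E = {v \<in> V. ecc V E v \<le> rad V E + 1}"

end

theory Submission
  imports Defs
begin


lemma walk_single[simp]: "walk E [x]"
  by (simp add: walk_def)

lemma walk_Cons2: "walk E (x # y # xs) \<longleftrightarrow> E x y \<and> walk E (y # xs)"
  unfolding walk_def
  by (auto simp: nth_Cons split: nat.splits)

lemma walk_append:
  assumes "walk E xs" "walk E ys" "last xs = hd ys"
  shows "walk E (xs @ tl ys)"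
  using assms
proof (induction xs)
  case Nil then show ?case by (simp add: walk_def)
next
  case (Cons x xs)
  show ?case
  proof (cases xs)
    case Nil
    with Cons show ?thesis
      by (cases ys) auto
  next
    case (Cons y zs)
    with Cons.prems Cons.IH show ?thesis
      by (auto simp: walk_Cons2)
  qed
qed

lemma walk_rev:
  assumes "walk E xs" "\<And>a b. E a b \<Longrightarrow> E b a"
  shows "walk E (rev xs)"
  using assms unfolding walk_def
  apply (auto simp: rev_nth)
  by (metis Suc_diff_Suc diff_Suc_less lessI less_trans_Suc zero_less_Suc Suc_lessD)

lemma walk_take:
  assumes "walk E xs" "0 < k"
  shows "walk E (take k xs)"
  using assms unfolding walk_def by auto

lemma walk_drop:
  assumes "walk E xs" "k < length xs"
  shows "walk E (drop k xs)"
  using assms unfolding walk_def by auto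




locale cg =
  fixes V :: "'a set" and E :: "'a \<Rightarrow> 'a \<Rightarrow> bool"
  assumes fg: "fin_graph V E" and cn: "connected_graph V E"
begin

abbreviation d where "d \<equiv> gdist E"

lemma finV: "finite V" using fg by (simp add: fin_graph_def)
lemma Vne: "V \<noteq> {}" using cn by (simp add: connected_graph_def)
lemma Esym: "E u v \<Longrightarrow> E v u" using fg by (simp add: fin_graph_def)
lemma EV: "E u v \<Longrightarrow> u \<in> V \<and> v \<in> V \<and> u \<noteq> v" using fg by (simp add: fin_graph_def)

lemma walk_nth_V:
  assumes "walk E xs" "length xs \<ge> 2" "k < length xs"
  shows "xs ! k \<in> V"
proof (cases "Suc k < length xs")
  case True
  with assms have "E (xs!k) (xs!Suc k)" by (simp add: walk_def)
  then show ?thesis using EV by blast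
next
  case False
  then have "k = Suc (k - 1)" "Suc (k-1) < length xs" using assms by auto
  with assms have "E (xs!(k-1)) (xs!k)" unfolding walk_def by metis
  then show ?thesis using EV by blast
qed

lemma gdist_le:
  assumes "walk E xs"
  shows "d (hd xs) (last xs) \<le> length xs - 1"
proof -
  have "xs \<noteq> []" using assms by (simp add: walk_def)
  then have "\<exists>ys. walk E ys \<and> hd ys = hd xs \<and> last ys = last xs \<and> length ys = Suc (length xs - 1)"
    using assms by (intro exI[of _ xs]) auto
  then show ?thesis unfolding gdist_def by (rule Least_le)
qed

lemma gdist_ex:
  assumes "u \<in> V" "v \<in> V"
  shows "\<exists>xs. walk E xs \<and> hd xs = u \<and> last xs = v \<and> length xs = Suc (d u v)"
proof -
  from cn assms obtain xs where xs: "walk E xs" "hd xs = u" "last xs = v"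
    unfolding connected_graph_def by blast
  then have ne: "xs \<noteq> []" by (simp add: walk_def)
  have "\<exists>n. \<exists>xs. walk E xs \<and> hd xs = u \<and> last xs = v \<and> length xs = Suc n"
    using xs ne by (intro exI[of _ "length xs - 1"] exI[of _ xs]) auto
  then show ?thesis unfolding gdist_def by (rule LeastI_ex)
qed

lemma d0[simp]: "d u u = 0"
  using gdist_le[of "[u]"] by simp

lemma deq0: assumes "u \<in> V" "v \<in> V" "d u v = 0" shows "u = v"
proof -
  from gdist_ex[OF assms(1,2)] assms(3) obtain xs where "walk E xs" "hd xs = u" "last xs = v" "length xs = 1"
    by auto
  then show ?thesis by (cases xs) auto
qed

lemma dtri: assumes "u \<in> V" "v \<in> V" "w \<in> V" shows "d u w \<le> d u v + d v w"
proof -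
  from gdist_ex[OF assms(1,2)] obtain xs where xs: "walk E xs" "hd xs = u" "last xs = v" "length xs = Suc (d u v)" by auto
  from gdist_ex[OF assms(2,3)] obtain ys where ys: "walk E ys" "hd ys = v" "last ys = w" "length ys = Suc (d v w)" by auto
  have w: "walk E (xs @ tl ys)" using walk_append xs ys by metis
  have "xs \<noteq> []" "ys \<noteq> []" using xs ys by (auto simp: walk_def)
  have "hd (xs @ tl ys) = u" using xs \<open>xs \<noteq> []\<close> by simp
  moreover have "last (xs @ tl ys) = w" using xs ys \<open>ys \<noteq> []\<close>
    by (cases ys) (auto simp: last_append)
  ultimately show ?thesis using gdist_le[OF w] xs ys by simp
qed

lemma dsym: assumes "u \<in> V" "v \<in> V" shows "d u v = d v u"
proof -
  have le: "d a b \<le> d b a" if "a \<in> V" "b \<in> V" for a b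
  proof -
    from gdist_ex[OF that(2,1)] obtain xs where xs: "walk E xs" "hd xs = b" "last xs = a" "length xs = Suc (d b a)" by auto
    have "walk E (rev xs)" using walk_rev[OF xs(1)] Esym by blast
    moreover have "xs \<noteq> []" using xs by (auto simp: walk_def)
    ultimately show ?thesis using gdist_le[of "rev xs"] xs by (simp add: hd_rev last_rev)
  qed
  show ?thesis using le[OF assms] le[OF assms(2,1)] by simp
qed

lemma dadj: assumes "E u v" shows "d u v = 1"
proof -
  have "walk E [u,v]" using assms by (simp add: walk_Cons2)
  then have "d u v \<le> 1" using gdist_le[of "[u,v]"] by simp
  moreover have "d u v \<noteq> 0" using deq0 EV assms by blast
  ultimately show ?thesis by simp
qed

lemma dstep: assumes "u \<in> V" "v \<in> V" "d u v = Suc n" shows "\<exists>w. E u w \<and> d w v = n"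
proof -
  from gdist_ex[OF assms(1,2)] assms(3) obtain xs where xs: "walk E xs" "hd xs = u" "last xs = v" "length xs = Suc (Suc n)"
    by auto
  then obtain w ys where ys: "xs = u # w # ys" by (cases xs; cases "tl xs") auto
  have "E u w" using xs ys by (simp add: walk_Cons2)
  have "walk E (w # ys)" using xs ys by (simp add: walk_Cons2)
  then have "d w v \<le> n" using gdist_le[of "w # ys"] xs ys by (simp add: last_ConsR)
  moreover have "Suc n \<le> 1 + d w v" using dtri[OF assms(1) _ assms(2), of w] EV[OF \<open>E u w\<close>] dadj[OF \<open>E u w\<close>] assms(3) by simp
  ultimately show ?thesis using \<open>E u w\<close> by (intro exI[of _ w]) simp
qed

lemma dlip: assumes "x \<in> V" "E a b" shows "d x a \<le> d x b + 1"
  using dtri[OF assms(1), of b a] EV[OF assms(2)] dadj[OF Esym[OF assms(2)]] by simp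

lemma dstep': assumes "x \<in> V" "v \<in> V" "d x v = Suc n" shows "\<exists>w. E v w \<and> d x w = n"
  using dstep[OF assms(2,1)] assms dsym EV by metis

lemma geo:
  assumes "x \<in> V"
  shows "v \<in> V \<Longrightarrow> d x v = n \<Longrightarrow> \<exists>G. walk E G \<and> hd G = v \<and> last G = x \<and> length G = Suc n \<and> (\<forall>k<Suc n. d x (G!k) = n - k)"
proof (induction n arbitrary: v)
  case 0
  then have "v = x" using deq0 assms by metis
  then show ?case by (intro exI[of _ "[v]"]) simp
next
  case (Suc n)
  from dstep'[OF assms Suc.prems(1,2)] obtain w where w: "E v w" "d x w = n" by blast
  from Suc.IH[of w] w EV obtain G where G: "walk E G" "hd G = w" "last G = x" "length G = Suc n"
    "\<forall>k<Suc n. d x (G!k) = n - k" by blast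
  have "G \<noteq> []" using G by auto
  then have "walk E (v # G)" using G w by (cases G) (auto simp: walk_Cons2)
  moreover have "\<forall>k<Suc (Suc n). d x ((v#G)!k) = Suc n - k"
    using G Suc.prems by (auto simp: nth_Cons split: nat.splits)
  ultimately show ?case using G \<open>G \<noteq> []\<close> by (intro exI[of _ "v # G"]) auto
qed

lemma walk_dist:
  assumes "walk E xs" "k < length xs" "hd xs \<in> V"
  shows "d (hd xs) (xs ! k) \<le> k"
proof -
  have "walk E (take (Suc k) xs)" using walk_take assms by blast
  moreover have "hd (take (Suc k) xs) = hd xs" using assms by (simp add: walk_def)
  moreover have "last (take (Suc k) xs) = xs ! k"
    using assms by (simp add: take_Suc_conv_app_nth)
  ultimately show ?thesis using gdist_le[of "take (Suc k) xs"] assms by simp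
qed

end



definition rpath :: "('a \<Rightarrow> 'a \<Rightarrow> bool) \<Rightarrow> 'a set \<Rightarrow> 'a list \<Rightarrow> bool" where
  "rpath E S P \<longleftrightarrow> walk E P \<and> (\<forall>k. 0 < k \<and> k < length P - 1 \<longrightarrow> P!k \<in> S)"

lemma shortcut_nth:
  assumes "i < length P" "k \<le> length P"
  shows "(take (Suc i) P @ drop k P) ! m = (if m \<le> i then P!m else P!(m - Suc i + k))"
proof -
  have "length (take (Suc i) P) = Suc i" using assms by simp
  then show ?thesis using assms by (simp add: nth_append add.commute)
qed

lemma shortcut:
  assumes rp: "rpath E S P" and ik: "Suc i < k" "k \<le> length P"
    and jn: "(k < length P \<and> E (P!i) (P!k)) \<or> (k = length P \<and> P!i = last P)"
  defines "Q \<equiv> take (Suc i) P @ drop k P"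
  shows "rpath E S Q \<and> hd Q = hd P \<and> last Q = last P \<and> length Q < length P"
proof -
  have il: "i < length P" using ik by simp
  have lenQ: "length Q = Suc i + (length P - k)" using il ik unfolding Q_def by simp
  have nthQ: "Q ! m = (if m \<le> i then P!m else P!(m - Suc i + k))" for m
    unfolding Q_def using shortcut_nth[OF il ik(2)] .
  have wP: "\<And>m. Suc m < length P \<Longrightarrow> E (P!m) (P!Suc m)" using rp by (simp add: rpath_def walk_def)
  have intP: "\<And>m. 0 < m \<Longrightarrow> m < length P - 1 \<Longrightarrow> P!m \<in> S" using rp by (simp add: rpath_def)
  have "walk E Q"
    unfolding walk_def
  proof (intro conjI allI impI)
    show "Q \<noteq> []" using lenQ by auto
    fix m assume m: "Suc m < length Q"
    show "E (Q!m) (Q!Suc m)"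
    proof (cases "Suc m \<le> i")
      case True then show ?thesis using nthQ wP il by simp
    next
      case False
      show ?thesis
      proof (cases "m = i")
        case True
        then have "k < length P" using m lenQ by simp
        then show ?thesis using True nthQ jn by simp
      next
        case False
        with \<open>\<not> Suc m \<le> i\<close> have "i < m" by simp
        obtain p where p: "m = Suc (i + p)" using \<open>i < m\<close> less_iff_Suc_add by blast
        have "Q!m = P!(p + k)" using nthQ p by simp
        moreover have "Q!Suc m = P!(Suc (p + k))" using nthQ p by simp
        ultimately have "Q!m = P!(m - Suc i + k)" "Q!Suc m = P!Suc (m - Suc i + k)" using p by simp_all
        moreover have "Suc (m - Suc i + k) < length P" using m lenQ \<open>i < m\<close> by simp
        ultimately show ?thesis using wP by simp
      qed
    qed
  qed
  moreover have "\<forall>m. 0 < m \<and> m < length Q - 1 \<longrightarrow> Q!m \<in> S"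
  proof (intro allI impI)
    fix m assume m: "0 < m \<and> m < length Q - 1"
    show "Q!m \<in> S"
    proof (cases "m \<le> i")
      case True then show ?thesis using nthQ intP m ik by simp
    next
      case False then show ?thesis using nthQ intP m lenQ ik by simp
    qed
  qed
  moreover have "hd Q = hd P" using il unfolding Q_def by (cases P) auto
  moreover have "last Q = last P"
  proof (cases "k < length P")
    case True then show ?thesis unfolding Q_def by simp
  next
    case False
    then have "k = length P" "P!i = last P" using jn by auto
    then show ?thesis unfolding Q_def using il by (simp add: take_Suc_conv_app_nth)
  qed
  moreover have "length Q < length P" using lenQ ik by simp
  ultimately show ?thesis by (simp add: rpath_def)
qed

lemma induced_path:
  "rpath E S P \<Longrightarrow> hd P \<noteq> last P \<Longrightarrow> \<exists>Q. rpath E S Q \<and> hd Q = hd P \<and> last Q = last P \<and>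
     (\<forall>i j. i < j \<longrightarrow> j < length Q \<longrightarrow> Q!i \<noteq> Q!j) \<and>
     (\<forall>i j. i < j \<longrightarrow> j < length Q \<longrightarrow> E (Q!i) (Q!j) \<longrightarrow> j = Suc i)"
proof (induction "length P" arbitrary: P rule: less_induct)
  case less
  show ?case
  proof (cases "(\<forall>i j. i < j \<longrightarrow> j < length P \<longrightarrow> P!i \<noteq> P!j) \<and>
     (\<forall>i j. i < j \<longrightarrow> j < length P \<longrightarrow> E (P!i) (P!j) \<longrightarrow> j = Suc i)")
    case True then show ?thesis using less.prems by blast
  next
    case False
    then obtain i j where ij: "i < j" "j < length P" "P!i = P!j \<or> (E (P!i) (P!j) \<and> j \<noteq> Suc i)"
      by blast
    obtain k where k: "Suc i < k" "k \<le> length P"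
      "(k < length P \<and> E (P!i) (P!k)) \<or> (k = length P \<and> P!i = last P)"
    proof (cases "P!i = P!j")
      case True
      show ?thesis
      proof (cases "Suc j < length P")
        case True
        have "E (P!j) (P!Suc j)" using less.prems(1) True by (simp add: rpath_def walk_def)
        then show ?thesis using that[of "Suc j"] True \<open>P!i = P!j\<close> ij by simp
      next
        case False
        then have "j = length P - 1" using ij by simp
        moreover have "P \<noteq> []" using ij by auto
        ultimately have "P!i = last P" using \<open>P!i = P!j\<close> ij by (simp add: last_conv_nth)
        then show ?thesis using that[of "length P"] ij by simp
      qed
    next
      case False
      then show ?thesis using that[of j] ij by simp
    qed
    let ?Q = "take (Suc i) P @ drop k P"
    have Q: "rpath E S ?Q \<and> hd ?Q = hd P \<and> last ?Q = last P \<and> length ?Q < length P"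
      using shortcut[OF less.prems(1) k] by blast
    from less.hyps[of ?Q] Q less.prems(2) show ?thesis by auto
  qed
qed




definition induced :: "('a \<Rightarrow> 'a \<Rightarrow> bool) \<Rightarrow> 'a list \<Rightarrow> bool" where
  "induced E Q \<longleftrightarrow> (\<forall>i j. i < j \<longrightarrow> j < length Q \<longrightarrow> Q!i \<noteq> Q!j) \<and>
     (\<forall>i j. i < j \<longrightarrow> j < length Q \<longrightarrow> E (Q!i) (Q!j) \<longrightarrow> j = Suc i)"

lemma induced_distinct: assumes "induced E Q" shows "distinct Q"
  unfolding distinct_conv_nth
proof (intro allI impI)
  fix i j assume "i < length Q" "j < length Q" "i \<noteq> j"
  have A: "\<And>i j. i < j \<Longrightarrow> j < length Q \<Longrightarrow> Q!i \<noteq> Q!j" using assms unfolding induced_def by blast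
  show "Q!i \<noteq> Q!j"
  proof (cases "i < j")
    case True then show ?thesis using A \<open>j < length Q\<close> by auto
  next
    case False then have "j < i" using \<open>i \<noteq> j\<close> by simp
    then show ?thesis using A[of j i] \<open>i < length Q\<close> by auto
  qed
qed

locale chg = cg + assumes ch: "chordal V E"
begin

lemma cycle_lemma:
  assumes w1: "walk E P1" and w2: "walk E P2"
    and l1: "length P1 \<ge> 3" and l2: "length P2 \<ge> 3"
    and i1: "induced E P1" and i2: "induced E P2"
    and e1: "hd P1 = last P2" and e2: "last P1 = hd P2"
    and disj: "\<And>a b. a < length P1 \<Longrightarrow> 0 < b \<Longrightarrow> b < length P2 - 1 \<Longrightarrow> P1!a \<noteq> P2!b"
    and noE: "\<And>a b. 0 < a \<Longrightarrow> a < length P1 - 1 \<Longrightarrow> 0 < b \<Longrightarrow> b < length P2 - 1 \<Longrightarrow> \<not> E (P1!a) (P2!b)"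
  shows False
proof -
  define N1 where "N1 = length P1"
  define N2 where "N2 = length P2"
  define cs where "cs = P1 @ butlast (tl P2)"
  define n where "n = N1 + N2 - 2"
  define f where "f k = (if k < N1 then P1!k else P2!(k - N1 + 1))" for k
  have ne1: "P1 \<noteq> []" and ne2: "P2 \<noteq> []" using l1 l2 by auto
  have lcs: "length cs = n" unfolding cs_def n_def N1_def N2_def using l1 l2 by simp
  have csf: "cs!k = f k" if "k < n" for k
  proof (cases "k < N1")
    case True then show ?thesis unfolding cs_def f_def N1_def by (simp add: nth_append)
  next
    case False
    then have "cs!k = butlast (tl P2) ! (k - N1)" unfolding cs_def N1_def by (simp add: nth_append)
    also have "\<dots> = tl P2 ! (k - N1)" using that False l2 unfolding n_def N1_def N2_def
      by (simp add: nth_butlast)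
    also have "\<dots> = P2 ! (Suc k - N1)" using that False l2 unfolding n_def N1_def N2_def by (simp add: nth_tl Suc_diff_le)
    finally show ?thesis unfolding f_def using False by (simp add: Suc_diff_le)
  qed
  have p1last: "P1!(N1-1) = last P1" using ne1 unfolding N1_def by (simp add: last_conv_nth)
  have p2hd: "P2!0 = hd P2" using ne2 by (simp add: hd_conv_nth)
  have p1hd: "P1!0 = hd P1" using ne1 by (simp add: hd_conv_nth)
  have p2last: "P2!(N2-1) = last P2" using ne2 unfolding N2_def by (simp add: last_conv_nth)
  have "N1 - 1 < N1" using l1 N1_def by simp
  then have fN1: "f (N1 - 1) = P2!0" using p1last p2hd e2 unfolding f_def by simp
  have fn: "f n = f 0"
  proof -
    have "\<not> n < N1" "n - N1 + 1 = N2 - 1" using l1 l2 unfolding n_def N1_def N2_def by auto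
    then have "f n = P2!(N2-1)" unfolding f_def by simp
    moreover have "0 < N1" using l1 unfolding N1_def by linarith
    then have "f 0 = P1!0" unfolding f_def by simp
    moreover note \<open>f n = P2!(N2-1)\<close>
    ultimately show ?thesis using p2last p1hd e1 by simp
  qed
  have f2: "f k = P2!(Suc k - N1)" if "N1 - 1 \<le> k" for k
  proof (cases "k = N1 - 1")
    case True then show ?thesis using fN1 \<open>N1 - 1 < N1\<close> by simp
  next
    case False then have "N1 \<le> k" using that by simp
    then show ?thesis unfolding f_def by (simp add: Suc_diff_le)
  qed
  have wP1: "\<And>m. Suc m < N1 \<Longrightarrow> E (P1!m) (P1!Suc m)" using w1 by (simp add: walk_def N1_def)
  have wP2: "\<And>m. Suc m < N2 \<Longrightarrow> E (P2!m) (P2!Suc m)" using w2 by (simp add: walk_def N2_def)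
  have fE: "E (f k) (f (Suc k))" if "k < n" for k
  proof (cases "Suc k < N1")
    case True then show ?thesis using wP1 unfolding f_def by simp
  next
    case False
    then have "f k = P2!(Suc k - N1)" "f (Suc k) = P2!(Suc (Suc k - N1))" using f2 by (auto simp: Suc_diff_le)
    moreover have "Suc (Suc k - N1) < N2" using that False unfolding n_def by simp
    ultimately show ?thesis using wP2 by simp
  qed
  have fnext: "cs!((k+1) mod n) = f (Suc k)" if "k < n" for k
  proof (cases "Suc k < n")
    case True then show ?thesis using csf by simp
  next
    case False
    then have "Suc k = n" using that by simp
    then show ?thesis using csf fn l1 l2 unfolding n_def by simp
  qed
  have "distinct cs"
  proof -
    have "distinct P1" using induced_distinct[OF i1] .
    moreover have "distinct P2" using induced_distinct[OF i2] .
    then have "distinct (butlast (tl P2))" by (simp add: distinct_butlast distinct_tl)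
    moreover have "set P1 \<inter> set (butlast (tl P2)) = {}"
    proof -
      have "x \<noteq> y" if xin: "x \<in> set P1" and yin: "y \<in> set (butlast (tl P2))" for x y
      proof -
        obtain a where a: "a < length P1" "P1!a = x" using xin by (auto simp: in_set_conv_nth)
        obtain b where b: "b < length (butlast (tl P2))" "butlast (tl P2) ! b = y"
          using yin by (auto simp: in_set_conv_nth)
        have "y = P2 ! Suc b" using b ne2 by (simp add: nth_butlast nth_tl)
        moreover have "Suc b < length P2 - 1" using b by simp
        ultimately show ?thesis using disj[OF a(1), of "Suc b"] a by simp
      qed
      then show ?thesis by blast
    qed
    ultimately show ?thesis unfolding cs_def by simp
  qed
  moreover have "length cs \<ge> 4" using lcs l1 l2 unfolding n_def N1_def N2_def by simp
  moreover have "set cs \<subseteq> V"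
  proof -
    have "set P1 \<subseteq> V" using walk_nth_V[OF w1] l1 by (auto simp: in_set_conv_nth)
    moreover have "set P2 \<subseteq> V" using walk_nth_V[OF w2] l2 by (auto simp: in_set_conv_nth)
    moreover have "set (butlast (tl P2)) \<subseteq> set P2"
      by (metis in_set_butlastD list.set_sel(2) subsetI tl_Nil)
    ultimately show ?thesis unfolding cs_def by auto
  qed
  moreover have "\<forall>i < length cs. E (cs ! i) (cs ! ((i + 1) mod length cs))"
    using fE fnext csf lcs by simp
  ultimately have H: "distinct cs \<and> length cs \<ge> 4 \<and> set cs \<subseteq> V \<and> (\<forall>i < length cs. E (cs ! i) (cs ! ((i + 1) mod length cs)))"
    by blast
  obtain a b where ab: "a < n" "b < n" "b \<noteq> (a + 1) mod n" "a \<noteq> (b + 1) mod n" "a \<noteq> b"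
    "E (cs ! a) (cs ! b)"
    using ch[unfolded chordal_def, rule_format, OF H] lcs by blast
  have key: False if ab': "a < b" "b < n" "b \<noteq> (a + 1) mod n" "a \<noteq> (b + 1) mod n" "E (f a) (f b)" for a b
  proof -
    have "a + 1 < n \<or> a + 1 = b" using ab' by linarith
    then have "b \<noteq> Suc a" using ab' by auto
    have nl: "\<not> (a = 0 \<and> b = n - 1)"
    proof
      assume "a = 0 \<and> b = n - 1"
      then have "b + 1 = n" using ab' by simp
      then show False using ab' \<open>a = 0 \<and> b = n - 1\<close> by simp
    qed
    show False
    proof (cases "b < N1")
      case True
      then have "E (P1!a) (P1!b)" using ab' unfolding f_def by simp
      then show False using i1 ab' True \<open>b \<noteq> Suc a\<close> unfolding induced_def N1_def by blast
    next
      case bN: False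
      show False
      proof (cases "N1 - 1 \<le> a")
        case True
        then have "E (P2!(Suc a - N1)) (P2!(Suc b - N1))" using ab' f2 by simp
        moreover have "Suc a - N1 < Suc b - N1" "Suc b - N1 < length P2"
          using True ab' bN l1 unfolding n_def N2_def by auto
        ultimately have "Suc b - N1 = Suc (Suc a - N1)" using i2 unfolding induced_def by blast
        then show False using True \<open>b \<noteq> Suc a\<close> bN by simp
      next
        case aN: False
        have fb: "f b = P2!(Suc b - N1)" using bN f2 by simp
        have bi: "0 < Suc b - N1" "Suc b - N1 < length P2 - 1" using bN ab' unfolding n_def N2_def by auto
        show False
        proof (cases "a = 0")
          case False
          have "a < N1" using aN by simp
          then have "f a = P1!a" unfolding f_def by simp
          moreover have "a < length P1 - 1" using aN N1_def by simp
          ultimately show False using noE[of a "Suc b - N1"] bi False ab' fb by simp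
        next
          case True
          have "0 < N1" using ne1 N1_def by simp
          then have "f a = P2!(N2 - 1)" using True p2last e1 p1hd unfolding f_def by simp
          then have "E (P2!(Suc b - N1)) (P2!(N2-1))" using ab' fb Esym by simp
          moreover have "Suc b - N1 < N2 - 1" using bi N2_def by simp
          ultimately have "N2 - 1 = Suc (Suc b - N1)" using i2 unfolding induced_def N2_def by auto
          then show False using nl True bN unfolding n_def by simp
        qed
      qed
    qed
  qed
  show False
  proof (cases "a < b")
    case True then show False using key[of a b] ab csf by simp
  next
    case False
    then have "b < a" using ab by simp
    then show False using key[of b a] ab csf Esym by simp
  qed
qed

end



context chg begin

lemma induced_path':
  assumes "rpath E S P" "hd P \<noteq> last P"
  obtains Q where "rpath E S Q" "hd Q = hd P" "last Q = last P" "induced E Q"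
  using induced_path[OF assms] unfolding induced_def by blast

lemma len3:
  assumes "walk E Q" "hd Q \<noteq> last Q" "\<not> E (hd Q) (last Q)"
  shows "length Q \<ge> 3"
proof -
  have "Q \<noteq> []" using assms by (simp add: walk_def)
  show ?thesis
  proof (rule ccontr)
    assume "\<not> 3 \<le> length Q"
    moreover have "length Q > 0" using \<open>Q \<noteq> []\<close> by simp
    ultimately have "length Q = 1 \<or> length Q = 2" by linarith
    then show False
    proof
      assume "length Q = 1" then show False using assms by (cases Q) auto
    next
      assume l: "length Q = 2"
      then obtain a b where "Q = [a, b]" by (cases Q; cases "tl Q") auto
      then show False using assms by (simp add: walk_Cons2)
    qed
  qed
qed

lemma rpath_interior:
  assumes "rpath E S P" "0 < k" "k < length P - 1" shows "P!k \<in> S"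
  using assms by (simp add: rpath_def)

theorem T_lemma:
  assumes x: "x \<in> V" and p: "p \<in> V" and q: "q \<in> V"
    and dp: "d x p = i" and dq: "d x q = i"
    and rp: "rpath E {g. i < d x g} P" and hp: "hd P = p" and lp: "last P = q"
  shows "p = q \<or> E p q"
proof (rule ccontr)
  assume "\<not> (p = q \<or> E p q)"
  then have pq: "p \<noteq> q" "\<not> E p q" by auto
  have "i \<noteq> 0"
  proof
    assume "i = 0"
    then have "p = x" "q = x" using deq0 x p q dp dq by metis+
    then show False using pq by simp
  qed
  have X1: "hd P \<noteq> last P" using hp lp pq by simp
  obtain P1 where P1': "rpath E {g. i < d x g} P1" "hd P1 = hd P" "last P1 = last P" "induced E P1"
    by (rule induced_path'[OF rp X1])
  then have P1: "rpath E {g. i < d x g} P1" "hd P1 = p" "last P1 = q" "induced E P1"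
    using hp lp by simp_all
  have w1: "walk E P1" using P1 by (simp add: rpath_def)
  have l1: "length P1 \<ge> 3" using len3[OF w1] P1 pq by simp
  obtain G1 where G1: "walk E G1" "hd G1 = q" "last G1 = x" "length G1 = Suc i" "\<forall>k<Suc i. d x (G1!k) = i - k"
    using geo[OF x q dq] by blast
  obtain G2 where G2: "walk E G2" "hd G2 = p" "last G2 = x" "length G2 = Suc i" "\<forall>k<Suc i. d x (G2!k) = i - k"
    using geo[OF x p dp] by blast
  define R where "R = rev G2"
  have wR: "walk E R" unfolding R_def using walk_rev[OF G2(1)] Esym by blast
  have G2ne: "G2 \<noteq> []" "G1 \<noteq> []" using G2 G1 by auto
  have hR: "hd R = x" "last R = p" unfolding R_def using G2 G2ne by (auto simp: hd_rev last_rev)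
  have lR: "length R = Suc i" unfolding R_def using G2 by simp
  have dR: "d x (R!k) = k" if "k < Suc i" for k
  proof -
    have "R!k = G2!(i - k)" unfolding R_def using that G2(4) by (simp add: rev_nth)
    then show ?thesis using G2(5) that by simp
  qed
  define P0 where "P0 = G1 @ tl R"
  have wP0: "walk E P0" unfolding P0_def using walk_append[OF G1(1) wR] G1 hR by simp
  have lP0: "length P0 = Suc (2 * i)" unfolding P0_def using G1 lR by simp
  have nthP0: "P0!k = (if k < Suc i then G1!k else R!(k - i))" if kl: "k < Suc (2*i)" for k
  proof (cases "k < Suc i")
    case True then show ?thesis unfolding P0_def using G1 by (simp add: nth_append)
  next
    case False
    then have "P0!k = tl R ! (k - Suc i)" unfolding P0_def using G1 by (simp add: nth_append)
    also have "\<dots> = R ! (Suc (k - Suc i))" using False kl lR by (simp add: nth_tl)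
    also have "Suc (k - Suc i) = k - i" using False by simp
    finally show ?thesis using False by simp
  qed
  have rP0: "rpath E {g. d x g < i} P0"
    unfolding rpath_def
  proof (intro conjI allI impI)
    show "walk E P0" by (rule wP0)
    fix k assume k: "0 < k \<and> k < length P0 - 1"
    show "P0!k \<in> {g. d x g < i}"
    proof (cases "k < Suc i")
      case True then show ?thesis using nthP0[of k] G1(5) k lP0 by simp
    next
      case False
      then have "k - i < Suc i" using k lP0 by simp
      then show ?thesis using nthP0[of k] dR False k lP0 by simp
    qed
  qed
  have hP0: "hd P0 = q" unfolding P0_def using G1 G2ne by simp
  have lastP0: "last P0 = p"
  proof -
    have "P0 ! (length P0 - 1) = p"
    proof -
      have "P0 ! (2*i) = R ! i" using nthP0[of "2*i"] \<open>i \<noteq> 0\<close> by simp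
      also have "\<dots> = last R"
      proof -
        have "R \<noteq> []" using lR by auto
        then show ?thesis using lR by (simp add: last_conv_nth)
      qed
      finally show ?thesis using hR lP0 by simp
    qed
    moreover have "P0 \<noteq> []" using lP0 by auto
    ultimately show ?thesis by (simp add: last_conv_nth)
  qed
  have X2: "hd P0 \<noteq> last P0" using hP0 lastP0 pq by simp
  obtain P2 where P2': "rpath E {g. d x g < i} P2" "hd P2 = hd P0" "last P2 = last P0" "induced E P2"
    by (rule induced_path'[OF rP0 X2])
  then have P2: "rpath E {g. d x g < i} P2" "hd P2 = q" "last P2 = p" "induced E P2"
    using hP0 lastP0 by simp_all
  have w2: "walk E P2" using P2 by (simp add: rpath_def)
  have "\<not> E q p" using pq Esym by blast
  then have l2: "length P2 \<ge> 3" using len3[OF w2] P2 pq by simp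
  have P1ge: "i \<le> d x (P1!a)" if al: "a < length P1" for a
  proof -
    have ne: "P1 \<noteq> []" using l1 by auto
    consider "a = 0" | "a = length P1 - 1" | "0 < a \<and> a < length P1 - 1" using al by linarith
    then show ?thesis
    proof cases
      case 1
      have "P1 ! 0 = hd P1" using ne by (simp add: hd_conv_nth)
      then have "P1 ! a = p" using 1 P1(2) by simp
      then show ?thesis using dp by simp
    next
      case 2
      have "P1 ! (length P1 - 1) = last P1" using ne by (simp add: last_conv_nth)
      then have "P1 ! a = q" using 2 P1(3) by simp
      then show ?thesis using dq by simp
    next
      case 3
      then have "P1!a \<in> {g. i < d x g}" using rpath_interior[OF P1(1), of a] by blast
      then show ?thesis by simp
    qed
  qed
  show False
  proof (rule cycle_lemma[OF w1 w2 l1 l2 P1(4) P2(4)])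
    show "hd P1 = last P2" "last P1 = hd P2" using P1 P2 by simp_all
  next
    fix a b assume a: "a < length P1" and b: "0 < b" "b < length P2 - 1"
    have "d x (P2!b) < i" using rpath_interior[OF P2(1) b] by simp
    then show "P1!a \<noteq> P2!b" using P1ge[OF a] by auto
  next
    fix a b assume a: "0 < a" "a < length P1 - 1" and b: "0 < b" "b < length P2 - 1"
    have "d x (P2!b) < i" using rpath_interior[OF P2(1) b] by simp
    moreover have "i < d x (P1!a)" using rpath_interior[OF P1(1) a] by simp
    ultimately show "\<not> E (P1!a) (P2!b)" using dlip[OF x, of "P1!a" "P2!b"] by auto
  qed
qed

end



context chg begin

theorem alpha1:
  assumes u: "u \<in> V" and x: "x \<in> V" and vw: "E v w"
    and h1: "d u w = d u v + 1" and h2: "d x v = d x w + 1"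
  shows "d u v + d x w \<le> d u x"
proof -
  have v: "v \<in> V" and w: "w \<in> V" using EV[OF vw] by auto
  define a where "a = d u v"
  define b where "b = d x w"
  define D where "D = d u x"
  obtain H where H: "walk E H" "hd H = v" "last H = u" "length H = Suc a" "\<forall>k<Suc a. d u (H!k) = a - k"
    using geo[OF u v] a_def by blast
  have xu: "d x u = D" using dsym[OF x u] D_def by simp
  obtain G where G: "walk E G" "hd G = u" "last G = x" "length G = Suc D" "\<forall>k<Suc D. d x (G!k) = D - k"
    using geo[OF x u xu] by blast
  have Gne: "G \<noteq> []" "H \<noteq> []" using G H by auto
  have GV: "G!k \<in> V" if "k < Suc D" for k
  proof (cases "D = 0")
    case True then have "k = 0" using that by simp
    then show ?thesis using G Gne u by (simp add: hd_conv_nth[symmetric])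
  next
    case False then show ?thesis using walk_nth_V[OF G(1)] G(4) that by simp
  qed
  have dG: "d u (G!k) = k" if "k < Suc D" for k
  proof -
    have "d u (G!k) \<le> k" using walk_dist[OF G(1)] G that u by simp
    moreover have "D \<le> d u (G!k) + d (G!k) x" using dtri[OF u GV[OF that] x] D_def by simp
    moreover have "d (G!k) x = D - k" using G(5) that dsym[OF x GV[OF that]] by simp
    ultimately show ?thesis using that by linarith
  qed
  define L where "L = H @ tl G"
  have wL: "walk E L" unfolding L_def using walk_append[OF H(1) G(1)] H G by simp
  have lL: "length L = Suc (a + D)" unfolding L_def using H G by simp
  have nthL: "L!k = (if k \<le> a then H!k else G!(k - a))" if kl: "k < Suc (a + D)" for k
  proof (cases "k < Suc a")
    case True then show ?thesis unfolding L_def using H by (simp add: nth_append)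
  next
    case False
    then have "L!k = tl G ! (k - Suc a)" unfolding L_def using H by (simp add: nth_append)
    also have "\<dots> = G ! (Suc (k - Suc a))" using False kl G by (simp add: nth_tl)
    also have "Suc (k - Suc a) = k - a" using False by simp
    finally show ?thesis using False by simp
  qed
  have lastL: "L ! (a + D) = x"
  proof -
    have Ha: "H!a = u" using H(3,4) Gne last_conv_nth[of H] by simp
    have G0: "G!0 = u" using G Gne by (simp add: hd_conv_nth[symmetric])
    have "L ! (a + D) = G ! D" using nthL[of "a + D"] Ha G0
      by (cases "D = 0") simp_all
    also have "\<dots> = x" using G Gne by (simp add: last_conv_nth)
    finally show ?thesis .
  qed
  have "\<exists>k. k < length L \<and> d x (L!k) \<le> b" using lastL lL by (intro exI[of _ "a + D"]) simp
  define k0 where "k0 = (LEAST k. k < length L \<and> d x (L!k) \<le> b)"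
  have k0: "k0 < length L" "d x (L!k0) \<le> b"
    using LeastI_ex[OF \<open>\<exists>k. _\<close>] unfolding k0_def by auto
  have k0min: "b < d x (L!k)" if "k < k0" for k
    using not_less_Least[of k "\<lambda>k. k < length L \<and> d x (L!k) \<le> b"] that k0(1) unfolding k0_def[symmetric]
    by auto
  have L0: "L!0 = v" unfolding L_def using H Gne by (simp add: nth_append hd_conv_nth[symmetric])
  have "k0 \<noteq> 0"
  proof
    assume "k0 = 0"
    then show False using k0(2) L0 h2 b_def by simp
  qed
  then obtain k1 where k1: "k0 = Suc k1" by (cases k0) auto
  have Ek: "E (L!k1) (L!k0)" using wL k0(1) k1 by (simp add: walk_def)
  have fV: "L!k0 \<in> V" using EV[OF Ek] by simp
  have "b < d x (L!k1)" using k0min k1 by simp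
  then have dfb: "d x (L!k0) = b" using dlip[OF x Ek] k0(2) by linarith
  define P where "P = w # take (Suc k0) L"
  have rP: "rpath E {g. b < d x g} P"
    unfolding rpath_def
  proof (intro conjI allI impI)
    have "walk E (take (Suc k0) L)" using walk_take[OF wL] by simp
    moreover have "take (Suc k0) L = v # tl (take (Suc k0) L)"
      using L0 lL by (cases L) auto
    ultimately show "walk E P" unfolding P_def using Esym[OF vw]
      by (metis walk_Cons2)
    fix m assume m: "0 < m \<and> m < length P - 1"
    then have "P!m = L!(m - 1)" "m - 1 < k0" unfolding P_def using k0(1)
      by (auto simp: nth_Cons split: nat.splits)
    then show "P!m \<in> {g. b < d x g}" using k0min by simp
  qed
  have hP: "hd P = w" unfolding P_def by simp
  have lP: "last P = L!k0" unfolding P_def using k0(1) by (simp add: take_Suc_conv_app_nth)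
  have "w = L!k0 \<or> E w (L!k0)" using T_lemma[OF x w fV _ dfb rP hP lP] b_def by simp
  then have wle: "d u w \<le> d u (L!k0) + 1" using dlip[OF u] by auto
  show ?thesis
  proof (cases "k0 \<le> a")
    case True
    then have "d u (L!k0) = a - k0" using nthL[of k0] H(5) k0(1) lL by simp
    then show ?thesis using wle h1 a_def \<open>k0 \<noteq> 0\<close> True by simp
  next
    case False
    then have e: "L!k0 = G!(k0 - a)" "k0 - a < Suc D" using nthL[of k0] k0(1) lL by auto
    then have "d u (L!k0) = k0 - a" "d x (L!k0) = D - (k0 - a)" using dG G(5) by auto
    then show ?thesis using wle h1 a_def b_def D_def dfb e(2) by linarith
  qed
qed

end



context cg begin

lemma d1E: assumes "u \<in> V" "v \<in> V" "d u v = 1" shows "E u v"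
proof -
  obtain w where "E u w" "d w v = 0" using dstep[OF assms(1,2)] assms(3) by auto
  then have "w = v" using deq0 EV assms by metis
  then show ?thesis using \<open>E u w\<close> by simp
qed

lemma ecc_ge: assumes "z \<in> V" shows "d v z \<le> ecc V E v"
  unfolding ecc_def using finV assms by (intro Max_ge) auto

lemma ecc_le: assumes "\<And>z. z \<in> V \<Longrightarrow> d v z \<le> n" shows "ecc V E v \<le> n"
  unfolding ecc_def using finV Vne assms by (subst Max_le_iff) auto

lemma ecc_tri: assumes "u \<in> V" "x \<in> V" shows "ecc V E u \<le> d u x + ecc V E x"
proof (rule ecc_le)
  fix z assume z: "z \<in> V"
  have "d u z \<le> d u x + d x z" using dtri[OF assms z] .
  also have "\<dots> \<le> d u x + ecc V E x" using ecc_ge[OF z] by simp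
  finally show "d u z \<le> d u x + ecc V E x" .
qed

lemma rad_ex: "\<exists>c\<in>V. ecc V E c = rad V E"
proof -
  have "Min (ecc V E ` V) \<in> ecc V E ` V" using finV Vne by (intro Min_in) auto
  then show ?thesis unfolding rad_def by auto
qed

lemma rad_le: "v \<in> V \<Longrightarrow> rad V E \<le> ecc V E v"
  unfolding rad_def using finV by (intro Min_le) auto

end

context chg begin

lemma TC:
  assumes z: "z \<in> V" and yw: "E y w" and dy: "d z y = j" and dw: "d z w = j" and j: "1 \<le> j"
  shows "\<exists>s. E y s \<and> E w s \<and> d z s = j - 1"
proof -
  have y: "y \<in> V" and w: "w \<in> V" using EV[OF yw] by auto
  have sy: "d z y = Suc (j - 1)" and sw: "d z w = Suc (j - 1)" using dy dw j by auto
  obtain a where a: "E y a" "d z a = j - 1" using dstep'[OF z y sy] by blast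
  obtain b where b: "E w b" "d z b = j - 1" using dstep'[OF z w sw] by blast
  have aV: "a \<in> V" and bV: "b \<in> V" using EV a b by auto
  show ?thesis
  proof (rule ccontr)
    assume nc: "\<not> ?thesis"
    then have nwa: "\<not> E w a" using a Esym by blast
    have nyb: "\<not> E y b" using nc b Esym by blast
    have "a \<noteq> b" using nwa b by auto
    have rp: "rpath E {g. j - 1 < d z g} [a, y, w, b]"
      unfolding rpath_def using a b yw j dy dw Esym
      by (auto simp: walk_Cons2 nth_Cons split: nat.splits)
    have "a = b \<or> E a b" using T_lemma[OF z aV bV a(2) b(2) rp] by simp
    then have ab: "E a b" using \<open>a \<noteq> b\<close> by simp
    have dya: "d y a = 1" using dadj[OF a(1)] .
    have dyw: "d y w = 1" using dadj[OF yw] .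
    have "b \<noteq> y" using b dy j by auto
    then have "d y b \<noteq> 0" using deq0[OF y bV] by auto
    moreover have "d y b \<noteq> 1" using d1E[OF y bV] nyb by auto
    ultimately have "1 < d y b" by simp
    then have rp2: "rpath E {g. 1 < d y g} [a, b, w]"
      unfolding rpath_def using ab b Esym
      by (auto simp: walk_Cons2 nth_Cons split: nat.splits)
    have "a = w \<or> E a w" using T_lemma[OF y aV w dya dyw rp2] by simp
    moreover have "a \<noteq> w" using a dw j by auto
    ultimately show False using nwa Esym by blast
  qed
qed

lemma neighbor:
  assumes y: "y \<in> V" and big: "rad V E + 2 \<le> ecc V E y"
  shows "\<exists>w. E y w \<and> ecc V E w < ecc V E y"
proof -
  define j where "j = ecc V E y"
  obtain c where c: "c \<in> V" "ecc V E c = rad V E" using rad_ex by blast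
  define r where "r = rad V E"
  define t where "t = d c y"
  have rj: "r + 2 \<le> j" using big r_def j_def by simp
  have "j \<le> d y c + r" using ecc_tri[OF y c(1)] c r_def j_def by simp
  then have t2: "2 \<le> t" using rj dsym[OF y c(1)] t_def by simp
  have dcz: "d c z \<le> r" if "z \<in> V" for z using ecc_ge[OF that, of c] c r_def by simp
  have dyz: "d y z \<le> j" if "z \<in> V" for z using ecc_ge[OF that, of y] j_def by simp
  define A where "A = {w. E y w \<and> d c w = t - 1}"
  define Bad where "Bad w = {z \<in> V. j \<le> d w z}" for w
  have finBad: "finite (Bad w)" for w unfolding Bad_def using finV by simp
  have claim1: "d y z = j \<and> d w z = j" if wA: "w \<in> A" and z: "z \<in> V" and jz: "j \<le> d w z" for w z
  proof -
    have ywE: "E y w" and dcw: "d c w = t - 1" using wA A_def by auto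
    have wV: "w \<in> V" using EV[OF ywE] by simp
    have "d z w \<le> d z y + 1" using dlip[OF z Esym[OF ywE]] .
    then have le1: "d w z \<le> d y z + 1" using dsym[OF z wV] dsym[OF z y] by simp
    have "d w z \<noteq> d y z + 1"
    proof
      assume eq: "d w z = d y z + 1"
      have "d c y = d c w + 1" using dcw t_def t2 by simp
      moreover have "d z w = d z y + 1" using eq dsym[OF z wV] dsym[OF z y] by simp
      ultimately have "d c w + d z y \<le> d c z" using alpha1[OF c(1) z Esym[OF ywE]] by simp
      moreover have "d z y = d w z - 1" using eq dsym[OF z y] by simp
      ultimately show False using dcz[OF z] dcw jz t2 rj by linarith
    qed
    then show ?thesis using le1 dyz[OF z] jz by linarith
  qed
  have Ane: "A \<noteq> {}"
  proof -
    have "d c y = Suc (t - 1)" using t_def t2 by simp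
    then obtain w where "E y w" "d c w = t - 1" using dstep'[OF c(1) y] by blast
    then show ?thesis unfolding A_def by blast
  qed
  obtain w where wA: "w \<in> A" and wmin: "\<And>w'. w' \<in> A \<Longrightarrow> card (Bad w) \<le> card (Bad w')"
  proof -
    obtain w0 where "w0 \<in> A" using Ane by blast
    from ex_has_least_nat[of "\<lambda>w. w \<in> A" w0 "\<lambda>w. card (Bad w)"] \<open>w0 \<in> A\<close>
    obtain w where "w \<in> A" "\<forall>w'. w' \<in> A \<longrightarrow> card (Bad w) \<le> card (Bad w')" by blast
    then show ?thesis using that by blast
  qed
  have ywE: "E y w" and dcw: "d c w = t - 1" using wA A_def by auto
  have wV: "w \<in> V" using EV[OF ywE] by simp
  show ?thesis
  proof (cases "Bad w = {}")
    case True
    have "ecc V E w \<le> j - 1"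
    proof (rule ecc_le)
      fix z assume "z \<in> V"
      then show "d w z \<le> j - 1" using True unfolding Bad_def by force
    qed
    then show ?thesis using ywE rj j_def by (intro exI[of _ w]) simp
  next
    case False
    then obtain z0 where z0: "z0 \<in> Bad w" by blast
    then have z0V: "z0 \<in> V" and "j \<le> d w z0" unfolding Bad_def by auto
    then have dz0: "d y z0 = j" "d w z0 = j" using claim1[OF wA] by auto
    have j1: "1 \<le> j" using rj by simp
    obtain s where s: "E y s" "E w s" "d z0 s = j - 1"
      using TC[OF z0V ywE _ _ j1] dz0 dsym[OF z0V y] dsym[OF z0V wV] by auto
    have sV: "s \<in> V" using EV[OF s(1)] by simp
    have dcs: "d c s = t - 1"
    proof -
      have "d c s \<le> d c w + 1" using dlip[OF c(1) Esym[OF s(2)]] .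
      moreover have "d c y \<le> d c s + 1" using dlip[OF c(1) s(1)] .
      moreover have "d c s \<noteq> t"
      proof
        assume "d c s = t"
        then have "d c s = d c w + 1" using dcw t2 by simp
        moreover have "d z0 w = d z0 s + 1" using s(3) dz0 dsym[OF z0V wV] j1 by simp
        ultimately have "d c w + d z0 s \<le> d c z0" using alpha1[OF c(1) z0V s(2)] by simp
        then show False using dcz[OF z0V] dcw s(3) t2 rj by linarith
      qed
      ultimately show ?thesis using dcw t_def t2 by linarith
    qed
    have sA: "s \<in> A" using s(1) dcs A_def by simp
    have sub: "Bad s \<subseteq> Bad w - {z0}"
    proof
      fix z assume zs: "z \<in> Bad s"
      then have zV: "z \<in> V" and jz: "j \<le> d s z" unfolding Bad_def by auto
      have ez: "d y z = j" "d s z = j" using claim1[OF sA zV jz] by auto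
      have "z \<noteq> z0" using ez s(3) dsym[OF z0V sV] j1 by auto
      moreover have "z \<in> Bad w"
      proof (rule ccontr)
        assume nz: "z \<notin> Bad w"
        then have "d w z < j" using zV unfolding Bad_def by auto
        moreover have "d z s \<le> d z w + 1" using dlip[OF zV Esym[OF s(2)]] .
        ultimately have dwz: "d w z = j - 1" using ez dsym[OF zV sV] dsym[OF zV wV] by linarith
        have "d z0 w = d z0 s + 1" using s(3) dz0 dsym[OF z0V wV] j1 by simp
        moreover have "d z s = d z w + 1" using dwz ez dsym[OF zV sV] dsym[OF zV wV] j1 by simp
        ultimately have "d z0 s + d z w \<le> d z0 z" using alpha1[OF z0V zV Esym[OF s(2)]] by simp
        moreover have "d z0 z \<le> d z0 c + d c z" using dtri[OF z0V c(1) zV] .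
        moreover have "d z0 c \<le> r" using dcz[OF z0V] dsym[OF z0V c(1)] by simp
        ultimately show False using dcz[OF zV] s(3) dwz dsym[OF zV wV] rj by linarith
      qed
      ultimately show "z \<in> Bad w - {z0}" by simp
    qed
    then have "card (Bad s) \<le> card (Bad w - {z0})" using finBad by (intro card_mono) auto
    also have "\<dots> < card (Bad w)" using card_Diff1_less[OF finBad z0] .
    finally show ?thesis using wmin[OF sA] by simp
  qed
qed

lemma certificate:
  "u \<in> V \<Longrightarrow> \<exists>x\<in>C1 V E. d u x + ecc V E x \<le> ecc V E u"
proof (induction "ecc V E u" arbitrary: u rule: less_induct)
  case less
  show ?case
  proof (cases "ecc V E u \<le> rad V E + 1")
    case True
    then have "u \<in> C1 V E" using less.prems by (simp add: C1_def)
    then show ?thesis by (intro bexI[of _ u]) simp_all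
  next
    case False
    then obtain w where w: "E u w" "ecc V E w < ecc V E u" using neighbor[OF less.prems] by auto
    have wV: "w \<in> V" using EV[OF w(1)] by simp
    obtain x where x: "x \<in> C1 V E" "d w x + ecc V E x \<le> ecc V E w" using less.hyps[OF w(2) wV] by blast
    have xV: "x \<in> V" using x(1) by (simp add: C1_def)
    have "d u x \<le> d u w + d w x" using dtri[OF less.prems wV xV] .
    then show ?thesis using x dadj[OF w(1)] w(2) by (intro bexI[of _ x]) simp_all
  qed
qed

end

theorem proposition9:
  fixes V :: "'a set" and E :: "'a \<Rightarrow> 'a \<Rightarrow> bool"
  assumes "fin_graph V E" and "connected_graph V E" and "chordal V E"
  shows "\<forall>u\<in>V. ecc V E u = Min ((\<lambda>x. gdist E u x + ecc V E x) ` C1 V E)"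
proof
  interpret chg V E using assms by (unfold_locales) auto
  fix u assume u: "u \<in> V"
  have fin: "finite (C1 V E)" using finV by (simp add: C1_def)
  obtain x where x: "x \<in> C1 V E" "gdist E u x + ecc V E x \<le> ecc V E u" using certificate[OF u] by blast
  have lb: "ecc V E u \<le> gdist E u y + ecc V E y" if "y \<in> C1 V E" for y
    using ecc_tri[OF u] that by (simp add: C1_def)
  have "gdist E u x + ecc V E x = ecc V E u" using x lb[OF x(1)] by simp
  then have "ecc V E u \<in> (\<lambda>x. gdist E u x + ecc V E x) ` C1 V E" using x(1) by force
  then show "ecc V E u = Min ((\<lambda>x. gdist E u x + ecc V E x) ` C1 V E)"
    using fin lb by (intro Min_eqI[symmetric]) auto
qed


end
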